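(* Let $q$ be a prime power and $n\ge1$. If $a,b$ are integers with $1\le a<b\le n(q-1)$, then $\dim(C_{n,b}^q)-\dim(C_{n,a}^q)\ge b-a$.
   Context: For a prime power $q$ and integers $n\ge 1$, $k\ge 0$, the projective Reed-Muller code $C_{n,k}^q\subseteq \mathbb{F}_q^N$, $N=\frac{q^{n+1}-1}{q-1}$, is defined as follows. For each point of $\mathbb{P}^n(\mathbb{F}_q)$ choose the affine representative $(p_0,\dots,p_n)\in\mathbb{F}_q^{n+1}\setminus\{0\}$ whose left-most nonzero coordinate equals $1$, and fix an ordering $P_1',\dots,P_N'$ of these representatives. Then $C_{n,k}^q=\{(F(P_1'),\dots,F(P_N')) : F\in \mathbb{F}_q[x_0,\dots,x_n]_k\}$, where $\mathbb{F}_q[x_0,\dots,x_n]_k$ is the space of homogeneous polynomials of degree $k$ together with $0$. *)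

theory Defs
  imports Complex_Main "HOL-Library.Function_Algebras"
begin

text \<open>Normalized affine representatives of the points of P^n(F_q): vectors
  p = (p_0,...,p_n) (coordinates beyond n are 0), p nonzero, whose left-most
  nonzero coordinate equals 1.\<close>
definition proj_points :: "nat \<Rightarrow> (nat \<Rightarrow> 'a::field) set" where
  "proj_points n = {p. (\<forall>i>n. p i = 0) \<and>
      (\<exists>j\<le>n. p j = 1 \<and> (\<forall>i<j. p i = 0))}"

definition monomials :: "nat \<Rightarrow> nat \<Rightarrow> (nat \<Rightarrow> nat) set" where
  "monomials n k = {e. (\<forall>i>n. e i = 0) \<and> (\<Sum>i\<le>n. e i) = k}"

definition hom_eval :: "nat \<Rightarrow> nat \<Rightarrow> ((nat \<Rightarrow> nat) \<Rightarrow> 'a::field) \<Rightarrow> (nat \<Rightarrow> 'a) \<Rightarrow> 'a" where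
  "hom_eval n k c p = (\<Sum>e\<in>monomials n k. c e * (\<Prod>i\<le>n. p i ^ e i))"

text \<open>The projective Reed-Muller code C_{n,k}: codewords are indexed by the
  points of proj_points n (value 0 outside this index set).\<close>
definition proj_RM :: "nat \<Rightarrow> nat \<Rightarrow> ((nat \<Rightarrow> 'a::field) \<Rightarrow> 'a) set" where
  "proj_RM n k = {(\<lambda>p. if p \<in> proj_points n then hom_eval n k c p else 0) | c. True}"

definition code_dim :: "((nat \<Rightarrow> 'a::field) \<Rightarrow> 'a) set \<Rightarrow> nat" where
  "code_dim C = vector_space.dim (\<lambda>(a::'a) f x. a * f x) C"

end

theory Submission
  imports Defs "HOL-Computational_Algebra.Polynomial" "HOL-Library.FuncSet"
begin

lemma sum_apply_fun: "(\<Sum>x\<in>A. f x) p = (\<Sum>x\<in>A. f x p)"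
  by (induct A rule: infinite_finite_induct) auto

lemma fermat_ff:
  fixes x :: "'a::{finite,field}"
  assumes "x \<noteq> 0"
  shows "x ^ (card (UNIV::'a set) - 1) = 1"
proof -
  let ?U = "UNIV - {0::'a}"
  have cU: "card ?U = card (UNIV::'a set) - 1" by (simp add: card_Diff_singleton)
  have bij: "bij_betw (\<lambda>y. x * y) ?U ?U"
    apply (auto simp: bij_betw_def inj_on_def image_def assms)
    subgoal for y by (rule bexI[of _ "y / x"]) (use assms in auto)
    done
  have "(\<Prod>y\<in>?U. x * y) = (\<Prod>y\<in>?U. y)"
    using prod.reindex_bij_betw[OF bij, of "\<lambda>y. y"] by simp
  moreover have "(\<Prod>y\<in>?U. x * y) = x ^ card ?U * (\<Prod>y\<in>?U. y)"
    by (simp add: prod.distrib)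
  moreover have "(\<Prod>y\<in>?U. y) \<noteq> 0" by simp
  ultimately show ?thesis using cU by (metis mult_cancel_right2)
qed

lemma pow_red:
  fixes x :: "'a::{finite,field}"
  assumes "m \<ge> 1"
  shows "x ^ m = x ^ ((m - 1) mod (card (UNIV::'a set) - 1) + 1)"
proof (cases "x = 0")
  case True then show ?thesis using assms by (simp add: power_0_left)
next
  case False
  let ?D = "card (UNIV::'a set) - 1"
  have e: "?D * ((m - 1) div ?D) + (m - 1) mod ?D = m - 1" by (rule mult_div_mod_eq)
  have "x ^ (m - 1) = x ^ (?D * ((m - 1) div ?D) + (m - 1) mod ?D)" by (simp only: e)
  also have "\<dots> = (x ^ ?D) ^ ((m - 1) div ?D) * x ^ ((m - 1) mod ?D)"
    by (simp only: power_add power_mult)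
  finally have "x ^ (m - 1) = x ^ ((m - 1) mod ?D)" using fermat_ff[OF False] by simp
  moreover have "x ^ m = x * x ^ (m - 1)" using assms by (cases m) auto
  ultimately show ?thesis by simp
qed

lemma pow_pad:
  fixes x :: "'a::{finite,field}"
  assumes "m \<ge> 1"
  shows "x ^ (m + (card (UNIV::'a set) - 1) * t) = x ^ m"
proof (cases "x = 0")
  case True then show ?thesis using assms by (simp add: power_0_left)
next
  case False
  then show ?thesis using fermat_ff[OF False] by (simp add: power_add power_mult)
qed

lemma card_ge2: "card (UNIV::'a::{finite,field} set) \<ge> 2"
proof -
  have "{0::'a, 1} \<subseteq> UNIV" by simp
  then have "card {0::'a, 1} \<le> card (UNIV::'a set)" by (rule card_mono[OF finite_UNIV])
  then show ?thesis by simp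
qed

lemma univariate_zero:
  fixes c :: "nat \<Rightarrow> 'a::{finite,field}"
  assumes "\<And>x::'a. (\<Sum>d\<le>card (UNIV::'a set) - 1. c d * x ^ d) = 0"
  shows "\<forall>d\<le>card (UNIV::'a set) - 1. c d = 0"
proof -
  let ?D = "card (UNIV::'a set) - 1"
  define p where "p = (\<Sum>d\<le>?D. monom (c d) d)"
  have pe: "poly p x = (\<Sum>d\<le>?D. c d * x ^ d)" for x
    unfolding p_def by (simp add: poly_sum poly_monom)
  have dg: "degree p \<le> ?D" unfolding p_def
    by (rule degree_sum_le) (auto intro: order.trans[OF degree_monom_le])
  have "p = 0"
  proof (rule ccontr)
    assume "p \<noteq> 0"
    then have "card {x. poly p x = 0} \<le> degree p" by (rule card_poly_roots_bound)
    moreover have "{x. poly p x = 0} = UNIV" using pe assms by auto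
    ultimately show False using dg card_ge2[where 'a='a] by simp
  qed
  show ?thesis
  proof (intro allI impI)
    fix d assume "d \<le> ?D"
    have "coeff p d = c d" unfolding p_def coeff_sum
      using \<open>d \<le> ?D\<close> by (simp add: coeff_monom)
    then show "c d = 0" using \<open>p = 0\<close> by simp
  qed
qed

lemma affine_indep:
  fixes w :: "(nat \<Rightarrow> nat) \<Rightarrow> 'a::{finite,field}"
  assumes "finite S" "finite T"
    and "\<forall>t\<in>T. (\<forall>i. t i \<le> card (UNIV::'a set) - 1) \<and> (\<forall>i. i \<notin> S \<longrightarrow> t i = 0)"
    and "\<forall>y::nat \<Rightarrow> 'a. (\<Sum>t\<in>T. w t * (\<Prod>i\<in>S. y i ^ t i)) = 0"
  shows "\<forall>t\<in>T. w t = 0"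
using assms proof (induct S arbitrary: T w rule: finite_induct)
  case empty
  then have "\<forall>t\<in>T. t = (\<lambda>_. 0)" by auto
  hence "T \<subseteq> {\<lambda>_. 0}" by auto
  then consider "T = {}" | "T = {\<lambda>_. 0}" by blast
  then show ?case using empty.prems(3) by cases auto
next
  case (insert s S)
  let ?D = "card (UNIV::'a set) - 1"
  have coef: "(\<Sum>t\<in>{t\<in>T. t s = d}. w t * (\<Prod>i\<in>S. y i ^ t i)) = 0" if "d \<le> ?D" for d y
  proof -
    define c where "c d = (\<Sum>t\<in>{t\<in>T. t s = d}. w t * (\<Prod>i\<in>S. y i ^ t i))" for d
    have "(\<Sum>d\<le>?D. c d * x ^ d) = 0" for x
    proof -
      have pr: "(\<Prod>i\<in>insert s S. (y(s:=x)) i ^ t i) = x ^ t s * (\<Prod>i\<in>S. y i ^ t i)" for t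
      proof -
        have "(\<Prod>i\<in>S. (y(s:=x)) i ^ t i) = (\<Prod>i\<in>S. y i ^ t i)"
          by (rule prod.cong) (use insert.hyps(2) in auto)
        then show ?thesis using insert.hyps(1,2) by simp
      qed
      have "(\<Sum>d\<le>?D. c d * x ^ d) = (\<Sum>d\<le>?D. \<Sum>t\<in>{t\<in>T. t s = d}. w t * (\<Prod>i\<in>insert s S. (y(s:=x)) i ^ t i))"
        unfolding c_def sum_distrib_right pr
        by (rule sum.cong[OF refl], rule sum.cong[OF refl]) (auto simp: algebra_simps)
      also have "\<dots> = (\<Sum>t\<in>T. w t * (\<Prod>i\<in>insert s S. (y(s:=x)) i ^ t i))"
        by (rule sum.group) (use insert.prems in auto)
      also have "\<dots> = 0" using insert.prems(3) by blast
      finally show ?thesis .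
    qed
    then show ?thesis using univariate_zero[of c] that c_def by auto
  qed
  show ?case
  proof
    fix t assume t: "t \<in> T"
    define d where "d = t s"
    have dD: "d \<le> ?D" using insert.prems(2) t d_def by auto
    define Td where "Td = (\<lambda>t. t(s:=0)) ` {t\<in>T. t s = d}"
    have inj: "inj_on (\<lambda>t. t(s:=0)) {t\<in>T. t s = d}"
    proof (rule inj_onI)
      fix a b assume "a \<in> {t\<in>T. t s = d}" "b \<in> {t\<in>T. t s = d}" "a(s:=0) = b(s:=0)"
      then have "a(s:=0, s:=d) = b(s:=0, s:=d)" by simp
      moreover have "a(s:=0, s:=d) = a" "b(s:=0, s:=d) = b" using \<open>a \<in> _\<close> \<open>b \<in> _\<close> by auto
      ultimately show "a = b" by simp
    qed
    have "\<forall>t'\<in>Td. w (t'(s:=d)) = 0"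
    proof (rule insert.hyps(3))
      show "finite Td" unfolding Td_def using insert.prems(1) by auto
      show "\<forall>t\<in>Td. (\<forall>i. t i \<le> ?D) \<and> (\<forall>i. i \<notin> S \<longrightarrow> t i = 0)"
        unfolding Td_def using insert.prems(2) by auto
      show "\<forall>y. (\<Sum>t\<in>Td. w (t(s := d)) * (\<Prod>i\<in>S. y i ^ t i)) = 0"
      proof
        fix y :: "nat \<Rightarrow> 'a"
        have "(\<Sum>t\<in>Td. w (t(s := d)) * (\<Prod>i\<in>S. y i ^ t i))
            = (\<Sum>t\<in>{t\<in>T. t s = d}. w (t(s:=0, s := d)) * (\<Prod>i\<in>S. y i ^ (t(s:=0)) i))"
          unfolding Td_def by (rule sum.reindex[OF inj, unfolded comp_def])
        also have "\<dots> = (\<Sum>t\<in>{t\<in>T. t s = d}. w t * (\<Prod>i\<in>S. y i ^ t i))"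
        proof (rule sum.cong[OF refl])
          fix t assume "t \<in> {t\<in>T. t s = d}"
          then have "t(s:=0, s:=d) = t" by auto
          moreover have "(\<Prod>i\<in>S. y i ^ (t(s:=0)) i) = (\<Prod>i\<in>S. y i ^ t i)"
            by (rule prod.cong) (use insert.hyps(2) in auto)
          ultimately show "w (t(s:=0, s:=d)) * (\<Prod>i\<in>S. y i ^ (t(s:=0)) i) = w t * (\<Prod>i\<in>S. y i ^ t i)"
            by simp
        qed
        also have "\<dots> = 0" using coef[OF dD] .
        finally show "(\<Sum>t\<in>Td. w (t(s := d)) * (\<Prod>i\<in>S. y i ^ t i)) = 0" .
      qed
    qed
    moreover have "t(s:=0) \<in> Td" unfolding Td_def using t d_def by auto
    moreover have "t(s:=0, s:=d) = t" using d_def by auto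
    ultimately show "w t = 0" by metis
  qed
qed

lemma mod_pin:
  fixes a b D s :: nat
  assumes "1 \<le> a" "a \<le> D" "1 \<le> b" "b \<le> D" "(a + s) mod D = (b + s) mod D"
  shows "a = b"
proof -
  have "(int a + int s) mod int D = (int b + int s) mod int D"
  proof -
    have "int ((a + s) mod D) = int ((b + s) mod D)" using assms(5) by simp
    then show ?thesis by (simp only: of_nat_mod of_nat_add)
  qed
  then have "int D dvd (int a + int s) - (int b + int s)" by (simp only: mod_eq_dvd_iff)
  then obtain k where k: "int a - int b = int D * k" by (auto elim!: dvdE)
  consider "k \<ge> 1" | "k \<le> -1" | "k = 0" by linarith
  then show ?thesis
  proof cases
    case 1
    then have "int D * k \<ge> int D * 1" by (intro mult_left_mono) auto
    then show ?thesis using k assms by linarith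
  next
    case 2
    then have "int D * k \<le> int D * (-1)" by (intro mult_left_mono) auto
    then show ?thesis using k assms by linarith
  next
    case 3 then show ?thesis using k by simp
  qed
qed

lemma sum_split_upd:
  fixes f :: "nat \<Rightarrow> nat"
  assumes "finite A" "j \<in> A"
  shows "sum f A = f j + sum (f(j:=0)) A"
proof -
  have "sum (f(j:=0)) A = (f(j:=0)) j + sum (f(j:=0)) (A - {j})" using assms by (rule sum.remove)
  also have "sum (f(j:=0)) (A - {j}) = sum f (A - {j})" by (rule sum.cong) auto
  then have "(f(j:=0)) j + sum (f(j:=0)) (A - {j}) = sum f (A - {j})" by simp
  finally show ?thesis using sum.remove[OF assms, of f] by simp
qed

definition adm :: "nat \<Rightarrow> nat \<Rightarrow> nat \<Rightarrow> nat \<Rightarrow> (nat \<Rightarrow> nat) \<Rightarrow> bool" where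
  "adm D n j r e \<longleftrightarrow> (\<forall>i. e i \<le> D) \<and> (\<forall>i>n. e i = 0) \<and> (\<forall>i<j. e i = 0) \<and> (\<exists>i. e i \<noteq> 0)
      \<and> (\<Sum>i\<le>n. e i) mod D = r"

lemma proj_indep_aux:
  fixes u :: "(nat \<Rightarrow> nat) \<Rightarrow> 'a::{finite,field}"
  shows "n + 1 - j = m \<Longrightarrow> finite E \<Longrightarrow> (\<forall>e\<in>E. adm (card (UNIV::'a set) - 1) n j r e) \<Longrightarrow>
    (\<forall>p\<in>proj_points n. (\<forall>i<j. p i = 0) \<longrightarrow> (\<Sum>e\<in>E. u e * (\<Prod>i\<le>n. p i ^ e i)) = 0) \<Longrightarrow>
    \<forall>e\<in>E. u e = 0"
proof (induct m arbitrary: j E u)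
  case 0
  have "E = {}"
  proof (rule ccontr)
    assume "E \<noteq> {}" then obtain e where "e \<in> E" by auto
    then have a: "adm (card (UNIV::'a set) - 1) n j r e" using 0 by auto
    then obtain i where i: "e i \<noteq> 0" unfolding adm_def by auto
    then have "i \<le> n" "j \<le> i" using a unfolding adm_def by (meson not_le)+
    then show False using 0(1) by simp
  qed
  then show ?case by simp
next
  case (Suc m)
  let ?D = "card (UNIV::'a set) - 1"
  have jn: "j \<le> n" using Suc.prems(1) by simp
  have D1: "?D \<ge> 1" using card_ge2[where 'a='a] by simp
  define S where "S = {j<..n}"
  define tlf where "tlf e = e(j:=0)" for e :: "nat \<Rightarrow> nat"
  define w where "w t = (\<Sum>e\<in>{e\<in>E. tlf e = t}. u e)" for t
  have adm: "\<And>e. e \<in> E \<Longrightarrow> adm ?D n j r e" using Suc.prems(3) by auto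
  have A: "(\<Sum>e\<in>E. u e * (\<Prod>i\<in>S. y i ^ e i)) = 0" for y :: "nat \<Rightarrow> 'a"
  proof -
    define p where "p i = (if i < j then 0 else if i = j then 1 else if i \<le> n then y i else 0)" for i
    have pP: "p \<in> proj_points n" unfolding proj_points_def p_def using jn by auto
    have pz: "\<forall>i<j. p i = 0" unfolding p_def by auto
    have pe: "(\<Prod>i\<le>n. p i ^ e i) = (\<Prod>i\<in>S. y i ^ e i)" if "e \<in> E" for e
    proof -
      have "(\<Prod>i\<le>n. p i ^ e i) = (\<Prod>i\<in>S. p i ^ e i)"
        by (rule prod.mono_neutral_right) (use adm[OF that] in \<open>auto simp: S_def p_def adm_def\<close>)
      also have "\<dots> = (\<Prod>i\<in>S. y i ^ e i)" by (rule prod.cong) (auto simp: S_def p_def)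
      finally show ?thesis .
    qed
    have "(\<Sum>e\<in>E. u e * (\<Prod>i\<in>S. y i ^ e i)) = (\<Sum>e\<in>E. u e * (\<Prod>i\<le>n. p i ^ e i))"
      by (rule sum.cong) (simp_all add: pe)
    also have "\<dots> = 0" using Suc.prems(4) pP pz by blast
    finally show ?thesis .
  qed
  have W: "\<forall>t\<in>tlf ` E. w t = 0"
  proof (rule affine_indep[where S=S])
    show "finite S" by (simp add: S_def)
    show "finite (tlf ` E)" using Suc.prems(2) by simp
    show "\<forall>t\<in>tlf ` E. (\<forall>i. t i \<le> ?D) \<and> (\<forall>i. i \<notin> S \<longrightarrow> t i = 0)"
    proof (intro ballI conjI allI impI)
      fix t i assume t: "t \<in> tlf ` E"
      then obtain e where e: "e \<in> E" "t = tlf e" by auto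
      show "t i \<le> ?D" using adm[OF e(1)] e(2) unfolding adm_def tlf_def by auto
      assume "i \<notin> S"
      then have "i < j \<or> i = j \<or> i > n" unfolding S_def by auto
      then show "t i = 0" using adm[OF e(1)] e(2) unfolding adm_def tlf_def by auto
    qed
    show "\<forall>y. (\<Sum>t\<in>tlf ` E. w t * (\<Prod>i\<in>S. y i ^ t i)) = 0"
    proof
      fix y :: "nat \<Rightarrow> 'a"
      have "(\<Sum>t\<in>tlf ` E. w t * (\<Prod>i\<in>S. y i ^ t i))
          = (\<Sum>t\<in>tlf ` E. \<Sum>e\<in>{e\<in>E. tlf e = t}. u e * (\<Prod>i\<in>S. y i ^ e i))"
        unfolding w_def sum_distrib_right
      proof (rule sum.cong[OF refl], rule sum.cong[OF refl])
        fix t e assume "e \<in> {e\<in>E. tlf e = t}"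
        then have "(\<Prod>i\<in>S. y i ^ t i) = (\<Prod>i\<in>S. y i ^ e i)"
          by (intro prod.cong) (auto simp: tlf_def S_def)
        then show "u e * (\<Prod>i\<in>S. y i ^ t i) = u e * (\<Prod>i\<in>S. y i ^ e i)" by simp
      qed
      also have "\<dots> = (\<Sum>e\<in>E. u e * (\<Prod>i\<in>S. y i ^ e i))"
        by (rule sum.group) (use Suc.prems(2) in auto)
      also have "\<dots> = 0" by (rule A)
      finally show "(\<Sum>t\<in>tlf ` E. w t * (\<Prod>i\<in>S. y i ^ t i)) = 0" .
    qed
  qed
  define E0 where "E0 = {e\<in>E. e j = 0}"
  have U0: "\<forall>e\<in>E0. u e = 0"
  proof (rule Suc.hyps[of "j+1"])
    show "n + 1 - (j + 1) = m" using Suc.prems(1) by simp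
    show "finite E0" using Suc.prems(2) by (simp add: E0_def)
    show "\<forall>e\<in>E0. adm ?D n (j + 1) r e" using adm by (auto simp: E0_def adm_def less_Suc_eq)
    show "\<forall>p\<in>proj_points n. (\<forall>i<j + 1. p i = 0) \<longrightarrow> (\<Sum>e\<in>E0. u e * (\<Prod>i\<le>n. p i ^ e i)) = 0"
    proof (intro ballI impI)
      fix p :: "nat \<Rightarrow> 'a" assume p: "p \<in> proj_points n" "\<forall>i<j+1. p i = 0"
      have z: "(\<Prod>i\<le>n. p i ^ e i) = 0" if "e \<in> E - E0" for e
      proof -
        have "e j \<noteq> 0" using that E0_def by auto
        then have "p j ^ e j = 0" using p(2) by simp
        then show ?thesis using jn by (intro prod_zero) auto
      qed
      have "(\<Sum>e\<in>E. u e * (\<Prod>i\<le>n. p i ^ e i)) = (\<Sum>e\<in>E0. u e * (\<Prod>i\<le>n. p i ^ e i))"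
        by (rule sum.mono_neutral_right) (use Suc.prems(2) z in \<open>auto simp: E0_def\<close>)
      moreover have "(\<Sum>e\<in>E. u e * (\<Prod>i\<le>n. p i ^ e i)) = 0" using Suc.prems(4) p by auto
      ultimately show "(\<Sum>e\<in>E0. u e * (\<Prod>i\<le>n. p i ^ e i)) = 0" by simp
    qed
  qed
  show ?case
  proof
    fix e assume eE: "e \<in> E"
    show "u e = 0"
    proof (cases "e j = 0")
      case True then show ?thesis using U0 eE E0_def by auto
    next
      case False
      let ?G = "{e'\<in>E. tlf e' = tlf e}"
      have rest: "u e' = 0" if e'G: "e' \<in> ?G - {e}" for e'
      proof (cases "e' j = 0")
        case True then show ?thesis using U0 that E0_def by auto
      next
        case False': False
        have ae: "adm ?D n j r e" "adm ?D n j r e'" using adm eE that by auto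
        have s1: "(\<Sum>i\<le>n. e i) = e j + (\<Sum>i\<le>n. tlf e i)"
          unfolding tlf_def using jn by (intro sum_split_upd) auto
        have s2: "(\<Sum>i\<le>n. e' i) = e' j + (\<Sum>i\<le>n. tlf e' i)"
          unfolding tlf_def using jn by (intro sum_split_upd) auto
        have tt: "tlf e' = tlf e" using that by auto
        have "(e j + (\<Sum>i\<le>n. tlf e i)) mod ?D = (e' j + (\<Sum>i\<le>n. tlf e i)) mod ?D"
          using ae s1 s2 tt unfolding adm_def by simp
        moreover have "1 \<le> e j" "e j \<le> ?D" "1 \<le> e' j" "e' j \<le> ?D"
          using False False' ae unfolding adm_def by auto
        ultimately have ej: "e j = e' j" using mod_pin[of "e j" ?D "e' j"] by blast
        have "e = (tlf e)(j := e j)" "e' = (tlf e')(j := e' j)" unfolding tlf_def by simp_all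
        then have "e' = e" using tt ej by metis
        then show ?thesis using that by simp
      qed
      have "w (tlf e) = 0" using W eE by auto
      moreover have "w (tlf e) = u e + (\<Sum>e'\<in>?G - {e}. u e')"
        unfolding w_def by (rule sum.remove) (use Suc.prems(2) eE in auto)
      moreover have "(\<Sum>e'\<in>?G - {e}. u e') = 0" using rest by (intro sum.neutral) auto
      ultimately show ?thesis by simp
    qed
  qed
qed

lemma vs_fun: "vector_space (\<lambda>(a::'a::field) (f::'b \<Rightarrow> 'a) x. a * f x)"
  by unfold_locales (simp_all add: fun_eq_iff algebra_simps)

lemma finite_bounded_funs: "finite {e::nat\<Rightarrow>nat. (\<forall>i>n. e i = 0) \<and> (\<forall>i. e i \<le> B)}"
proof -
  have "{e::nat\<Rightarrow>nat. (\<forall>i>n. e i = 0) \<and> (\<forall>i. e i \<le> B)}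
     \<subseteq> (\<lambda>f i. if i \<le> n then f i else 0) ` (\<Pi>\<^sub>E i\<in>{..n}. {..B})"
  proof
    fix e :: "nat \<Rightarrow> nat" assume e: "e \<in> {e. (\<forall>i>n. e i = 0) \<and> (\<forall>i. e i \<le> B)}"
    have "e = (\<lambda>i. if i \<le> n then restrict e {..n} i else 0)"
      using e by (auto simp: fun_eq_iff)
    moreover have "restrict e {..n} \<in> (\<Pi>\<^sub>E i\<in>{..n}. {..B})" using e by auto
    ultimately show "e \<in> (\<lambda>f i. if i \<le> n then f i else 0) ` (\<Pi>\<^sub>E i\<in>{..n}. {..B})" by blast
  qed
  moreover have "finite ((\<lambda>f i. if i \<le> n then f i else 0) ` (\<Pi>\<^sub>E i\<in>{..n}. {..B}))"
    by (intro finite_imageI finite_PiE) auto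
  ultimately show ?thesis by (rule finite_subset)
qed

definition mon :: "nat \<Rightarrow> (nat \<Rightarrow> nat) \<Rightarrow> (nat \<Rightarrow> 'a::field) \<Rightarrow> 'a" where
  "mon n e p = (if p \<in> proj_points n then \<Prod>i\<le>n. p i ^ e i else 0)"

definition Rset :: "nat \<Rightarrow> nat \<Rightarrow> nat \<Rightarrow> (nat \<Rightarrow> nat) set" where
  "Rset D n k = {e. adm D n 0 (k mod D) e \<and> (\<Sum>i\<le>n. e i) \<le> k}"

lemma finite_Rset: "finite (Rset D n k)"
  by (rule finite_subset[OF _ finite_bounded_funs[of n D]]) (auto simp: Rset_def adm_def)

lemma finite_monomials: "finite (monomials n k)"
proof (rule finite_subset[OF _ finite_bounded_funs[of n k]])
  show "monomials n k \<subseteq> {e. (\<forall>i>n. e i = 0) \<and> (\<forall>i. e i \<le> k)}"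
  proof
    fix e :: "nat \<Rightarrow> nat" assume "e \<in> monomials n k"
    then have e: "\<forall>i>n. e i = 0" "sum e {..n} = k" by (auto simp: monomials_def)
    have "e i \<le> k" for i
    proof (cases "i \<le> n")
      case True then show ?thesis using e(2) member_le_sum[of i "{..n}" e] by auto
    next
      case False then show ?thesis using e(1) by auto
    qed
    then show "e \<in> {e. (\<forall>i>n. e i = 0) \<and> (\<forall>i. e i \<le> k)}" using e by auto
  qed
qed

lemma span_RM:
  fixes n k :: nat
  assumes "k \<ge> 1"
  shows "(proj_RM n k :: ((nat \<Rightarrow> 'a::{finite,field}) \<Rightarrow> 'a) set) \<subseteq>
    module.span (\<lambda>(a::'a) f x. a * f x) (mon n ` Rset (card (UNIV::'a set) - 1) n k)"
proof
  let ?D = "card (UNIV::'a set) - 1"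
  interpret fv: vector_space "\<lambda>(a::'a) (f::(nat \<Rightarrow> 'a) \<Rightarrow> 'a) x. a * f x" by (rule vs_fun)
  have D1: "?D \<ge> 1" using card_ge2[where 'a='a] by simp
  define red where "red e i = (if e i = 0 then 0 else (e i - 1) mod ?D + 1)" for e :: "nat \<Rightarrow> nat" and i
  have redR: "red e \<in> Rset ?D n k" if e: "e \<in> monomials n k" for e
  proof -
    have e1: "\<forall>i>n. e i = 0" "(\<Sum>i\<le>n. e i) = k" using e by (auto simp: monomials_def)
    have "\<exists>i. e i \<noteq> 0"
    proof (rule ccontr)
      assume "\<not> (\<exists>i. e i \<noteq> 0)" then have "(\<Sum>i\<le>n. e i) = 0" by simp
      then show False using e1 assms by simp
    qed
    then obtain i where "e i \<noteq> 0" by blast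
    then have nz: "\<exists>i. red e i \<noteq> 0" by (auto simp: red_def)
    have le: "red e i \<le> e i" for i
    proof -
      have h: "(e i - 1) mod ?D \<le> e i - 1" by (rule mod_less_eq_dividend)
      show ?thesis
      proof (cases "e i = 0")
        case True then show ?thesis by (simp add: red_def)
      next
        case False
        then have "red e i = (e i - 1) mod ?D + 1" by (simp add: red_def)
        then show ?thesis using h False by linarith
      qed
    qed
    have md: "red e i mod ?D = e i mod ?D" for i
    proof (cases "e i = 0")
      case True then show ?thesis by (simp add: red_def)
    next
      case False
      have "red e i mod ?D = ((e i - 1) mod ?D + 1) mod ?D" by (simp add: red_def False)
      also have "\<dots> = (e i - 1 + 1) mod ?D" by (rule mod_add_left_eq)
      finally show ?thesis using False by simp
    qed
    have "(\<Sum>i\<le>n. red e i) mod ?D = (\<Sum>i\<le>n. red e i mod ?D) mod ?D" by (simp add: mod_sum_eq)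
    also have "\<dots> = (\<Sum>i\<le>n. e i mod ?D) mod ?D" by (simp only: md)
    also have "\<dots> = k mod ?D" using e1 by (simp add: mod_sum_eq)
    finally have smod: "(\<Sum>i\<le>n. red e i) mod ?D = k mod ?D" .
    have "(\<Sum>i\<le>n. red e i) \<le> (\<Sum>i\<le>n. e i)" by (rule sum_mono) (rule le)
    then have sle: "(\<Sum>i\<le>n. red e i) \<le> k" using e1 by simp
    have bd: "red e i \<le> ?D" for i
      unfolding red_def using D1 by (auto simp: Suc_le_eq)
    have sup: "\<forall>i>n. red e i = 0" using e1 by (simp add: red_def)
    show ?thesis unfolding Rset_def adm_def using nz smod sle bd sup by auto
  qed
  have pr: "(\<Prod>i\<le>n. p i ^ e i) = (\<Prod>i\<le>n. p i ^ red e i)" for e and p :: "nat \<Rightarrow> 'a"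
  proof (rule prod.cong[OF refl])
    fix i
    show "p i ^ e i = p i ^ red e i"
    proof (cases "e i = 0")
      case True then show ?thesis by (simp add: red_def)
    next
      case False then show ?thesis using pow_red[of "e i" "p i"] by (simp add: red_def)
    qed
  qed
  fix x assume "x \<in> (proj_RM n k :: ((nat \<Rightarrow> 'a) \<Rightarrow> 'a) set)"
  then obtain c where x: "x = (\<lambda>p. if p \<in> proj_points n then hom_eval n k c p else 0)"
    unfolding proj_RM_def by auto
  have "x = (\<Sum>e\<in>monomials n k. (\<lambda>(a::'a) f x. a * f x) (c e) (mon n (red e)))"
  proof (rule ext)
    fix p :: "nat \<Rightarrow> 'a"
    show "x p = (\<Sum>e\<in>monomials n k. (\<lambda>(a::'a) f x. a * f x) (c e) (mon n (red e))) p"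
    proof (cases "p \<in> proj_points n")
      case True
      have "x p = (\<Sum>e\<in>monomials n k. c e * (\<Prod>i\<le>n. p i ^ e i))"
        using True by (simp add: x hom_eval_def)
      also have "\<dots> = (\<Sum>e\<in>monomials n k. c e * mon n (red e) p)"
      proof (rule sum.cong[OF refl])
        fix e show "c e * (\<Prod>i\<le>n. p i ^ e i) = c e * mon n (red e) p"
          using True pr[of p e] by (simp add: mon_def)
      qed
      finally show ?thesis unfolding sum_apply_fun by simp
    next
      case False
      then show ?thesis unfolding sum_apply_fun by (simp add: x mon_def)
    qed
  qed
  also have "\<dots> \<in> fv.span (mon n ` Rset ?D n k)"
    by (intro fv.span_sum fv.span_scale fv.span_base imageI redR)
  finally show "x \<in> fv.span (mon n ` Rset ?D n k)" .
qed

lemma mon_in_RM: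
  fixes n k :: nat
  assumes e: "e \<in> Rset (card (UNIV::'a::{finite,field} set) - 1) n k"
  shows "(mon n e :: (nat \<Rightarrow> 'a) \<Rightarrow> 'a) \<in> proj_RM n k"
proof -
  let ?D = "card (UNIV::'a set) - 1"
  have D1: "?D \<ge> 1" using card_ge2[where 'a='a] by simp
  have a: "\<forall>i. e i \<le> ?D" "\<forall>i>n. e i = 0" "\<exists>i. e i \<noteq> 0"
    "(\<Sum>i\<le>n. e i) mod ?D = k mod ?D" "(\<Sum>i\<le>n. e i) \<le> k"
    using e unfolding Rset_def adm_def by (auto simp: mod_mod_trivial)
  obtain i0 where i0: "e i0 \<noteq> 0" using a(3) by blast
  have i0n: "i0 \<le> n" using i0 a(2) by (meson not_le)
  have "?D dvd k - (\<Sum>i\<le>n. e i)" using a(4) a(5) mod_eq_dvd_iff_nat by metis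
  then obtain t where t: "k - (\<Sum>i\<le>n. e i) = ?D * t" by (auto elim: dvdE)
  define e' where "e' = e(i0 := e i0 + ?D * t)"
  have "(\<Sum>i\<le>n. e' i) = e' i0 + (\<Sum>i\<le>n. (e'(i0:=0)) i)"
    using i0n by (intro sum_split_upd) auto
  moreover have "(\<Sum>i\<le>n. e i) = e i0 + (\<Sum>i\<le>n. (e(i0:=0)) i)"
    using i0n by (intro sum_split_upd) auto
  moreover have "e'(i0:=0) = e(i0:=0)" by (simp add: e'_def)
  ultimately have "(\<Sum>i\<le>n. e' i) = (\<Sum>i\<le>n. e i) + ?D * t" by (simp add: e'_def)
  then have se': "(\<Sum>i\<le>n. e' i) = k" using t a(5) by simp
  have e'M: "e' \<in> monomials n k" unfolding monomials_def using se' a(2) i0n by (auto simp: e'_def)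
  have pe: "(\<Prod>i\<le>n. p i ^ e' i) = (\<Prod>i\<le>n. p i ^ e i)" for p :: "nat \<Rightarrow> 'a"
  proof (rule prod.cong[OF refl])
    fix i show "p i ^ e' i = p i ^ e i"
    proof (cases "i = i0")
      case True then show ?thesis using pow_pad[of "e i0" "p i0" t] i0 by (simp add: e'_def)
    next
      case False then show ?thesis by (simp add: e'_def)
    qed
  qed
  define c where "c f = (if f = e' then 1 else (0::'a))" for f
  have "hom_eval n k c p = (\<Prod>i\<le>n. p i ^ e i)" for p :: "nat \<Rightarrow> 'a"
  proof -
    have "hom_eval n k c p = (\<Sum>f\<in>monomials n k. if f = e' then (\<Prod>i\<le>n. p i ^ f i) else 0)"
      unfolding hom_eval_def c_def by (rule sum.cong) auto
    also have "\<dots> = (\<Prod>i\<le>n. p i ^ e' i)" using e'M finite_monomials by simp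
    finally show ?thesis using pe by simp
  qed
  then have "mon n e = (\<lambda>p. if p \<in> proj_points n then hom_eval n k c p else 0)"
    by (auto simp: fun_eq_iff mon_def)
  then show ?thesis unfolding proj_RM_def by blast
qed

lemma mon_indep:
  fixes n k :: nat
  assumes "E \<subseteq> Rset (card (UNIV::'a::{finite,field} set) - 1) n k"
    and "\<forall>p\<in>proj_points n. (\<Sum>e\<in>E. u e * (mon n e p :: 'a)) = 0"
  shows "\<forall>e\<in>E. u e = 0"
proof (rule proj_indep_aux[where j=0 and m="n+1" and r="k mod (card (UNIV::'a set) - 1)"])
  show "finite E" using assms(1) finite_Rset finite_subset by blast
  show "\<forall>e\<in>E. adm (card (UNIV::'a set) - 1) n 0 (k mod (card (UNIV::'a set) - 1)) e"
    using assms(1) unfolding Rset_def by auto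
  show "\<forall>p\<in>proj_points n. (\<forall>i<0. p i = 0) \<longrightarrow> (\<Sum>e\<in>E. u e * (\<Prod>i\<le>n. p i ^ e i)) = 0"
    using assms(2) by (simp add: mon_def)
qed simp

lemma mon_inj:
  fixes n k :: nat
  shows "inj_on (mon n :: _ \<Rightarrow> (nat \<Rightarrow> 'a::{finite,field}) \<Rightarrow> 'a) (Rset (card (UNIV::'a set) - 1) n k)"
proof (rule inj_onI, rule ccontr)
  fix e e' assume R: "e \<in> Rset (card (UNIV::'a set) - 1) n k" "e' \<in> Rset (card (UNIV::'a set) - 1) n k"
    and eq: "(mon n e :: (nat \<Rightarrow> 'a) \<Rightarrow> 'a) = mon n e'" and ne: "e \<noteq> e'"
  define u where "u f = (if f = e then 1 else - 1 :: 'a)" for f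
  have "\<forall>f\<in>{e,e'}. u f = 0"
  proof (rule mon_indep[where k=k])
    show "{e, e'} \<subseteq> Rset (card (UNIV::'a set) - 1) n k" using R by auto
    show "\<forall>p\<in>proj_points n. (\<Sum>f\<in>{e, e'}. u f * (mon n f p :: 'a)) = 0"
      using ne eq by (simp add: u_def)
  qed
  then show False by (simp add: u_def)
qed

lemma indep_mon:
  fixes n k :: nat
  shows "\<not> module.dependent (\<lambda>(a::'a::{finite,field}) (f::(nat \<Rightarrow> 'a) \<Rightarrow> 'a) x. a * f x)
           (mon n ` Rset (card (UNIV::'a set) - 1) n k)"
proof -
  let ?R = "Rset (card (UNIV::'a set) - 1) n k"
  interpret fv: vector_space "\<lambda>(a::'a) (f::(nat \<Rightarrow> 'a) \<Rightarrow> 'a) x. a * f x" by (rule vs_fun)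
  have key: "u v = 0" if t: "finite t" "t \<subseteq> mon n ` ?R"
       and sum0: "(\<Sum>w\<in>t. (\<lambda>x. u w * w x)) = 0" and vt: "v \<in> t"
     for t :: "((nat \<Rightarrow> 'a) \<Rightarrow> 'a) set" and u :: "((nat \<Rightarrow> 'a) \<Rightarrow> 'a) \<Rightarrow> 'a" and v
  proof -
    define E where "E = {e \<in> ?R. mon n e \<in> t}"
    have tE: "t = mon n ` E" using t(2) unfolding E_def by auto
    have inj: "inj_on (mon n :: _ \<Rightarrow> (nat \<Rightarrow> 'a) \<Rightarrow> 'a) E"
      by (rule inj_on_subset[OF mon_inj[of n k]]) (auto simp: E_def)
    have "\<forall>e\<in>E. u (mon n e) = 0"
    proof (rule mon_indep[where k=k])
      show "E \<subseteq> ?R" unfolding E_def by auto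
      show "\<forall>p\<in>proj_points n. (\<Sum>e\<in>E. u (mon n e) * mon n e p) = 0"
      proof
        fix p :: "nat \<Rightarrow> 'a"
        have "(\<Sum>e\<in>E. u (mon n e) * mon n e p) = (\<Sum>v\<in>t. (\<lambda>x. u v * v x)) p"
          unfolding sum_apply_fun tE by (simp add: sum.reindex[OF inj])
        then show "(\<Sum>e\<in>E. u (mon n e) * mon n e p) = 0" using sum0 by simp
      qed
    qed
    moreover obtain e where "e \<in> E" "v = mon n e" using vt tE by blast
    ultimately show "u v = 0" by simp
  qed
  show ?thesis unfolding fv.independent_explicit_module
    apply (intro allI impI)
    subgoal for t u v using key[of t u v] by blast
    done
qed

lemma exist_z:
  fixes D :: nat
  assumes "D \<ge> 1"
  shows "k \<le> n * D \<Longrightarrow> \<exists>z. z 0 = 1 \<and> (\<forall>i>n. z i = 0) \<and> (\<forall>i. z i \<le> D) \<and> (\<Sum>i\<le>n. z i) = k + 1"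
proof (induct n arbitrary: k)
  case 0
  then show ?case using assms by (intro exI[of _ "\<lambda>i. if i = 0 then 1 else 0"]) auto
next
  case (Suc n)
  show ?case
  proof (cases "k \<le> n * D")
    case True
    then obtain z where z: "z 0 = 1" "\<forall>i>n. z i = 0" "\<forall>i. z i \<le> D" "(\<Sum>i\<le>n. z i) = k + 1"
      using Suc.hyps by blast
    then show ?thesis by (intro exI[of _ z]) auto
  next
    case False
    then obtain z where z: "z 0 = 1" "\<forall>i>n. z i = 0" "\<forall>i. z i \<le> D" "(\<Sum>i\<le>n. z i) = n * D + 1"
      using Suc.hyps[of "n * D"] by blast
    define z' where "z' = z(Suc n := k - n * D)"
    have "(\<Sum>i\<le>n. z' i) = (\<Sum>i\<le>n. z i)" by (rule sum.cong) (auto simp: z'_def)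
    then have "(\<Sum>i\<le>Suc n. z' i) = n * D + 1 + (k - n * D)" using z(4) by (simp add: z'_def)
    also have "\<dots> = k + 1" using False by simp
    finally have "(\<Sum>i\<le>Suc n. z' i) = k + 1" .
    moreover have "k - n * D \<le> D" using Suc.prems by simp
    ultimately show ?thesis using z by (intro exI[of _ z']) (auto simp: z'_def)
  qed
qed

lemma count_step:
  fixes D n k :: nat
  assumes D1: "D \<ge> 1" and k: "k < n * D"
  shows "card (Rset D n k) + 1 \<le> card (Rset D n (k+1))"
proof -
  define ld where "ld e = (LEAST i. e i \<noteq> (0::nat))" for e :: "nat \<Rightarrow> nat"
  define nv where "nv v = (if v < D then v + 1 else (1::nat))" for v
  define inc where "inc e = e(ld e := nv (e (ld e)))" for e
  have ldp: "e (ld e) \<noteq> 0" "\<forall>i<ld e. e i = 0" if "\<exists>i. e i \<noteq> 0" for e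
  proof -
    show "e (ld e) \<noteq> 0" unfolding ld_def using that by (rule LeastI_ex)
    show "\<forall>i<ld e. e i = 0"
    proof (intro allI impI)
      fix i assume "i < ld e"
      then have "\<not> (e i \<noteq> 0)" unfolding ld_def by (rule not_less_Least)
      then show "e i = 0" by simp
    qed
  qed
  have ld_eq: "ld e = j" if "e j \<noteq> 0" "\<forall>i<j. e i = 0" for e j
    unfolding ld_def
  proof (rule Least_equality)
    show "e j \<noteq> 0" by (rule that(1))
    fix y assume y: "e y \<noteq> 0"
    show "j \<le> y"
    proof (rule ccontr)
      assume "\<not> j \<le> y" then have "y < j" by simp
      then have "e y = 0" using that(2) by simp
      then show False using y by simp
    qed
  qed
  have nvb: "1 \<le> nv v \<and> nv v \<le> D" if "v \<le> D" for v
  proof (cases "v < D")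
    case True then have "nv v = v + 1" by (simp add: nv_def)
    then show ?thesis using True by simp
  next
    case False then have "nv v = 1" by (simp add: nv_def)
    then show ?thesis using D1 by simp
  qed
  have nv_inj: "v = v'" if "1 \<le> v" "v \<le> D" "1 \<le> v'" "v' \<le> D" "nv v = nv v'" for v v'
  proof (cases "v < D")
    case True
    then have a: "nv v = v + 1" by (simp add: nv_def)
    show ?thesis
    proof (cases "v' < D")
      case True
      then have "nv v' = v' + 1" by (simp add: nv_def)
      then show ?thesis using a that(5) by simp
    next
      case False
      then have "nv v' = 1" by (simp add: nv_def)
      then show ?thesis using a that by simp
    qed
  next
    case False
    then have a: "nv v = 1" by (simp add: nv_def)
    show ?thesis
    proof (cases "v' < D")
      case True
      then have "nv v' = v' + 1" by (simp add: nv_def)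
      then show ?thesis using a that by simp
    next
      case False': False
      then show ?thesis using False that by simp
    qed
  qed
  have Rk: "(\<forall>i. e i \<le> D) \<and> (\<forall>i>n. e i = 0) \<and> (\<exists>i. e i \<noteq> 0) \<and> (\<Sum>i\<le>n. e i) mod D = k mod D
      \<and> (\<Sum>i\<le>n. e i) \<le> k" if "e \<in> Rset D n k" for e
    using that unfolding Rset_def adm_def mem_Collect_eq by blast
  have incR: "inc e \<in> Rset D n (k+1) \<and> ld (inc e) = ld e" if eR: "e \<in> Rset D n k" for e
  proof -
    note a = Rk[OF eR]
    define j where "j = ld e"
    have ne: "\<exists>i. e i \<noteq> 0" using a by blast
    have ej: "e j \<noteq> 0" "\<forall>i<j. e i = 0" unfolding j_def using ldp[OF ne] by blast+
    have jn: "j \<le> n"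
    proof (rule ccontr)
      assume "\<not> j \<le> n" then have "e j = 0" using a by simp
      then show False using ej(1) by simp
    qed
    have ie: "inc e = e(j := nv (e j))" unfolding inc_def j_def by simp
    have ejD: "e j \<le> D" using a by blast
    have nvj: "1 \<le> nv (e j)" "nv (e j) \<le> D" using nvb[OF ejD] by auto
    have ldi: "ld (inc e) = j"
    proof (rule ld_eq)
      show "inc e j \<noteq> 0" using ie nvj by simp
      show "\<forall>i<j. inc e i = 0" using ie ej(2) by simp
    qed
    have s1: "(\<Sum>i\<le>n. e i) = e j + (\<Sum>i\<le>n. (e(j:=0)) i)" using jn by (intro sum_split_upd) auto
    have s2: "(\<Sum>i\<le>n. inc e i) = inc e j + (\<Sum>i\<le>n. ((inc e)(j:=0)) i)" using jn by (intro sum_split_upd) auto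
    have s2': "(\<Sum>i\<le>n. inc e i) = nv (e j) + (\<Sum>i\<le>n. (e(j:=0)) i)" using s2 ie by simp
    define S where "S = (\<Sum>i\<le>n. e i)"
    have sm: "S mod D = k mod D" "S \<le> k" using a unfolding S_def by blast+
    have sk1: "(S + 1) mod D = (k + 1) mod D"
    proof -
      have "(S + 1) mod D = (S mod D + 1) mod D" by (rule mod_add_left_eq[symmetric])
      also have "\<dots> = (k mod D + 1) mod D" using sm(1) by simp
      also have "\<dots> = (k + 1) mod D" by (rule mod_add_left_eq)
      finally show ?thesis .
    qed
    have sums: "(\<Sum>i\<le>n. inc e i) mod D = (k+1) mod D \<and> (\<Sum>i\<le>n. inc e i) \<le> k + 1"
    proof (cases "e j < D")
      case True
      then have "nv (e j) = e j + 1" by (simp add: nv_def)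
      then have "(\<Sum>i\<le>n. inc e i) = S + 1" using s1 s2' unfolding S_def by simp
      then show ?thesis using sk1 sm by simp
    next
      case False
      then have ejD': "e j = D" using ejD by linarith
      have "nv (e j) = 1" using False by (simp add: nv_def)
      then have eq1: "(\<Sum>i\<le>n. inc e i) + D = S + 1" using s1 s2' ejD' unfolding S_def by simp
      have "(\<Sum>i\<le>n. inc e i) mod D = ((\<Sum>i\<le>n. inc e i) + D) mod D" by simp
      also have "\<dots> = (S + 1) mod D" by (simp only: eq1)
      finally have "(\<Sum>i\<le>n. inc e i) mod D = (k+1) mod D" using sk1 by simp
      moreover have "(\<Sum>i\<le>n. inc e i) \<le> k + 1" using eq1 sm(2) D1 by linarith
      ultimately show ?thesis by simp
    qed
    have b1: "\<forall>i. inc e i \<le> D"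
    proof
      fix i show "inc e i \<le> D" using ie nvj a by (cases "i = j") auto
    qed
    have b2: "\<forall>i>n. inc e i = 0"
    proof (intro allI impI)
      fix i assume "i > n" then have "i \<noteq> j" "e i = 0" using jn a by auto
      then show "inc e i = 0" using ie by simp
    qed
    have b3: "\<exists>i. inc e i \<noteq> 0" using ie nvj by (intro exI[of _ j]) simp
    have "inc e \<in> Rset D n (k+1)"
      unfolding Rset_def adm_def mem_Collect_eq using sums b1 b2 b3 by simp
    then show ?thesis using ldi j_def by simp
  qed
  have nzR: "e (ld e) \<noteq> 0" "\<forall>i<ld e. e i = 0" "\<forall>i. e i \<le> D" if "e \<in> Rset D n k" for e
  proof -
    have ne: "\<exists>i. e i \<noteq> 0" using Rk[OF that] by blast
    show "e (ld e) \<noteq> 0" "\<forall>i<ld e. e i = 0" using ldp[OF ne] by blast+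
    show "\<forall>i. e i \<le> D" using Rk[OF that] by blast
  qed
  have inj: "inj_on inc (Rset D n k)"
  proof (rule inj_onI)
    fix e e' assume e: "e \<in> Rset D n k" and e': "e' \<in> Rset D n k" and eq: "inc e = inc e'"
    have l: "ld e = ld e'"
    proof -
      have "ld e = ld (inc e)" using incR[OF e] by simp
      also have "\<dots> = ld (inc e')" using eq by simp
      also have "\<dots> = ld e'" using incR[OF e'] by simp
      finally show ?thesis .
    qed
    define j where "j = ld e"
    have i1: "inc e = e(j := nv (e j))" unfolding inc_def j_def by simp
    have i2: "inc e' = e'(j := nv (e' j))" unfolding inc_def j_def l by simp
    have "nv (e j) = nv (e' j)"
    proof -
      have "inc e j = inc e' j" using eq by simp
      then show ?thesis using i1 i2 by simp
    qed
    moreover have "e j \<noteq> 0" "e' j \<noteq> 0" using nzR[OF e] nzR[OF e'] l unfolding j_def by simp_all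
    moreover have "e j \<le> D" "e' j \<le> D" using nzR[OF e] nzR[OF e'] by blast+
    ultimately have ejj: "e j = e' j" using nv_inj[of "e j" "e' j"] by simp
    show "e = e'"
    proof
      fix i show "e i = e' i"
      proof (cases "i = j")
        case True then show ?thesis using ejj by simp
      next
        case False
        have "inc e i = inc e' i" using eq by simp
        then show ?thesis using i1 i2 False by simp
      qed
    qed
  qed
  obtain z where z: "z 0 = 1" "\<forall>i>n. z i = 0" "\<forall>i. z i \<le> D" "(\<Sum>i\<le>n. z i) = k + 1"
    using exist_z[OF D1, of k n] k by auto
  have zR: "z \<in> Rset D n (k+1)"
  proof -
    have "\<exists>i. z i \<noteq> 0" using z(1) by (intro exI[of _ 0]) simp
    then show ?thesis unfolding Rset_def adm_def mem_Collect_eq using z by simp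
  qed
  have znot: "z \<notin> inc ` Rset D n k"
  proof
    assume "z \<in> inc ` Rset D n k"
    then obtain e where e: "e \<in> Rset D n k" "z = inc e" by auto
    have "ld z = 0" by (rule ld_eq) (use z in simp_all)
    then have l0: "ld e = 0" using incR[OF e(1)] e(2) by simp
    have i0: "z = e(0 := nv (e 0))" using e(2) l0 unfolding inc_def by simp
    then have nv1: "nv (e 0) = 1" using z(1) by (metis fun_upd_same)
    have e01: "e 0 \<noteq> 0" "e 0 \<le> D" using nzR[OF e(1)] l0 by simp_all
    have "\<not> e 0 < D"
    proof
      assume "e 0 < D" then have "nv (e 0) = e 0 + 1" by (simp add: nv_def)
      then show False using nv1 e01 by simp
    qed
    then have e0: "e 0 = D" using e01 by linarith
    have s1: "(\<Sum>i\<le>n. e i) = e 0 + (\<Sum>i\<le>n. (e(0:=0)) i)" by (intro sum_split_upd) auto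
    have s2: "(\<Sum>i\<le>n. z i) = z 0 + (\<Sum>i\<le>n. (z(0:=0)) i)" by (intro sum_split_upd) auto
    have "z(0:=0) = e(0:=0)" using i0 by simp
    then have "(\<Sum>i\<le>n. e i) = D + k" using s1 s2 z(1,4) e0 by simp
    then show False using Rk[OF e(1)] D1 by simp
  qed
  have "inc ` Rset D n k \<subseteq> Rset D n (k+1) - {z}" using incR znot by auto
  then have "card (inc ` Rset D n k) \<le> card (Rset D n (k+1) - {z})"
    by (intro card_mono) (auto intro: finite_Rset)
  moreover have "card (inc ` Rset D n k) = card (Rset D n k)" by (rule card_image[OF inj])
  moreover have "card (Rset D n (k+1) - {z}) = card (Rset D n (k+1)) - 1"
    using zR finite_Rset by (simp add: card_Diff_singleton)
  moreover have "card (Rset D n (k+1)) > 0"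
    using zR finite_Rset[of D n "k+1"] card_gt_0_iff by blast
  ultimately show ?thesis by linarith
qed

lemma count_chain:
  fixes D n a b :: nat
  assumes D1: "D \<ge> 1" and ab: "a \<le> b" and b: "b \<le> n * D"
  shows "card (Rset D n a) + (b - a) \<le> card (Rset D n b)"
  using ab b
proof (induct b rule: dec_induct)
  case base then show ?case by simp
next
  case (step m)
  then have "card (Rset D n m) + 1 \<le> card (Rset D n (m+1))"
    by (intro count_step[OF D1]) auto
  moreover have "card (Rset D n a) + (m - a) \<le> card (Rset D n m)" using step by auto
  ultimately show ?case using step(1) by simp
qed

theorem mainTheorem2:
  fixes n a b :: nat
  assumes "n \<ge> 1"
    and "1 \<le> a" and "a < b" and "b \<le> n * (card (UNIV :: 'a set) - 1)"
  shows "int (code_dim (proj_RM n b :: ((nat \<Rightarrow> 'a::{finite,field}) \<Rightarrow> 'a) set))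
           - int (code_dim (proj_RM n a :: ((nat \<Rightarrow> 'a) \<Rightarrow> 'a) set))
         \<ge> int b - int a"
proof -
  let ?D = "card (UNIV::'a set) - 1"
  interpret fv: vector_space "\<lambda>(a::'a) (f::(nat \<Rightarrow> 'a) \<Rightarrow> 'a) x. a * f x" by (rule vs_fun)
  have D1: "?D \<ge> 1" using card_ge2[where 'a='a] by simp
  have lo: "card (Rset ?D n b) \<le> code_dim (proj_RM n b :: ((nat \<Rightarrow> 'a) \<Rightarrow> 'a) set)"
  proof -
    let ?B = "mon n ` Rset ?D n b :: ((nat \<Rightarrow> 'a) \<Rightarrow> 'a) set"
    let ?V = "proj_RM n b :: ((nat \<Rightarrow> 'a) \<Rightarrow> 'a) set"
    have BV: "?B \<subseteq> ?V" using mon_in_RM by blast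
    have VB: "?V \<subseteq> fv.span ?B" by (rule span_RM) (use assms in auto)
    have ind: "\<not> fv.dependent ?B" by (rule indep_mon)
    have "fv.span ?V \<subseteq> fv.span ?B" using fv.span_mono[OF VB] fv.span_span by simp
    moreover have "fv.span ?B \<subseteq> fv.span ?V" by (rule fv.span_mono[OF BV])
    ultimately have "fv.span ?V = fv.span ?B" by (rule antisym)
    then have "fv.dim ?V = fv.dim ?B" by (rule fv.span_eq_dim)
    also have "\<dots> = card ?B" by (rule fv.dim_eq_card_independent[OF ind])
    finally have "card (mon n ` Rset ?D n b :: ((nat \<Rightarrow> 'a) \<Rightarrow> 'a) set) \<le> fv.dim (proj_RM n b)" by simp
    moreover have "card (mon n ` Rset ?D n b :: ((nat \<Rightarrow> 'a) \<Rightarrow> 'a) set) = card (Rset ?D n b)"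
      by (rule card_image[OF mon_inj])
    ultimately show ?thesis unfolding code_dim_def by simp
  qed
  have hi: "code_dim (proj_RM n a :: ((nat \<Rightarrow> 'a) \<Rightarrow> 'a) set) \<le> card (Rset ?D n a)"
  proof -
    have "fv.dim (proj_RM n a :: ((nat \<Rightarrow> 'a) \<Rightarrow> 'a) set)
        \<le> card (mon n ` Rset ?D n a :: ((nat \<Rightarrow> 'a) \<Rightarrow> 'a) set)"
      by (rule fv.dim_le_card[OF span_RM]) (use assms finite_Rset in auto)
    also have "\<dots> \<le> card (Rset ?D n a)" by (rule card_image_le[OF finite_Rset])
    finally show ?thesis unfolding code_dim_def .
  qed
  have ch: "card (Rset ?D n a) + (b - a) \<le> card (Rset ?D n b)"
    by (rule count_chain[OF D1]) (use assms in auto)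
  have "code_dim (proj_RM n a :: ((nat \<Rightarrow> 'a) \<Rightarrow> 'a) set) + (b - a)
      \<le> code_dim (proj_RM n b :: ((nat \<Rightarrow> 'a) \<Rightarrow> 'a) set)"
    using lo hi ch by linarith
  then have "int (code_dim (proj_RM n a :: ((nat \<Rightarrow> 'a) \<Rightarrow> 'a) set)) + int (b - a)
      \<le> int (code_dim (proj_RM n b :: ((nat \<Rightarrow> 'a) \<Rightarrow> 'a) set))"
    by linarith
  moreover have "int (b - a) = int b - int a" using assms(3) by simp
  ultimately show ?thesis by linarith
qed

end
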